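(* Let $\Bbbk$ be a field, let $\mathrm{Var}$ be a variety of $\Bbbk$-algebras with one binary product defined by a set of polylinear identities, and let $\text{tri-}\mathrm{Var}$ be the corresponding replicated variety of tri-algebras. Let $X$ be a set, $\dot X=\{\dot x\mid x\in X\}$ a disjoint copy of $X$, $F=\mathrm{Var}\langle X\cup\dot X\rangle$, $\varphi:F\to F$ the algebra homomorphism with $\varphi(x)=\varphi(\dot x)=x$ ($x\in X$), and $F^{(3)}$ the space $F$ with operations $f\vdash g=\varphi(f)g$, $f\dashv g=f\varphi(g)$, $f\perp g=fg$. Let $V$ be the subalgebra of $F^{(3)}$ generated by $\dot X$. Then $V$ is isomorphic to the free algebra in $\text{tri-}\mathrm{Var}$ generated by $X$; more precisely, for every $A\in\text{tri-}\mathrm{Var}$ and every map $\alpha:X\to A$ there is a unique homomorphism of tri-algebras $\chi:V\to A$ with $\chi(\dot x)=\alpha(x)$ for all $x\in X$.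
   Context: Tri-algebras: linear spaces with three bilinear operations $\dashv$ (=$\mu_{\{1\}}$), $\vdash$ (=$\mu_{\{2\}}$), $\perp$ (=$\mu_{\{1,2\}}$). For a polylinear element $\Phi(x_1,\dots,x_n)$ of the free algebra in one binary operation $\mu$ and nonempty $H\subseteq\{1,\dots,n\}$, $\Phi_H$ is obtained by viewing each monomial as a binary rooted tree with leaves $x_1,\dots,x_n$, marking the leaves $x_i$, $i\in H$, and replacing the label $\mu$ at each node by $\mu_S$, where $S\subseteq\{1,2\}$ is the set of branches (left=1, right=2) containing a marked leaf, or by $\mu_{\{1\}}$ if $S=\varnothing$. The variety $\text{tri-}\mathrm{Var}$ consists of tri-algebras satisfying $(a* b)\vdash c=(a\star b)\vdash c$ and $a\dashv(b* c)=a\dashv(b\star c)$ for all $*,\star\in\{\vdash,\dashv,\perp\}$, and $\Phi_H=0$ for every defining polylinear identity $\Phi$ of $\mathrm{Var}$ of degree $n$ and every nonempty $H\subseteq\{1,\dots,n\}$. *)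

theory Defs
  imports Main HOL.Modules "HOL-Library.Multiset"
begin

datatype 'v mag = Leaf 'v | Node "'v mag" "'v mag"

fun leaves :: "'v mag \<Rightarrow> 'v list" where
  "leaves (Leaf v) = [v]"
| "leaves (Node t1 t2) = leaves t1 @ leaves t2"

fun mag_eval :: "('b \<Rightarrow> 'b \<Rightarrow> 'b) \<Rightarrow> ('v \<Rightarrow> 'b) \<Rightarrow> 'v mag \<Rightarrow> 'b" where
  "mag_eval m a (Leaf v) = a v"
| "mag_eval m a (Node t1 t2) = m (mag_eval m a t1) (mag_eval m a t2)"

text \<open>Evaluation of the monomial with marked leaves H in a tri-algebra with operations
  l = dashv (mu_{1}), r = vdash (mu_{2}), p = perp (mu_{1,2}): the label at a node is
  mu_S where S is the set of branches containing a marked leaf, and mu_{1} if S is empty.\<close>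
fun tri_mag_eval :: "('b \<Rightarrow> 'b \<Rightarrow> 'b) \<Rightarrow> ('b \<Rightarrow> 'b \<Rightarrow> 'b) \<Rightarrow> ('b \<Rightarrow> 'b \<Rightarrow> 'b)
    \<Rightarrow> 'v set \<Rightarrow> ('v \<Rightarrow> 'b) \<Rightarrow> 'v mag \<Rightarrow> 'b" where
  "tri_mag_eval l r p H a (Leaf v) = a v"
| "tri_mag_eval l r p H a (Node t1 t2) =
     (let m1 = (set (leaves t1) \<inter> H \<noteq> {}); m2 = (set (leaves t2) \<inter> H \<noteq> {});
          op = (if m1 \<and> m2 then p else if m2 then r else l)
      in op (tri_mag_eval l r p H a t1) (tri_mag_eval l r p H a t2))"

text \<open>An element of the free (non-associative) algebra in one binary operation is given as
  a finite linear combination of monomials: a list of (coefficient, tree) pairs.\<close>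
type_synonym ('k, 'v) mpoly = "('k \<times> 'v mag) list"

definition lin_comb :: "'b \<Rightarrow> ('b \<Rightarrow> 'b \<Rightarrow> 'b) \<Rightarrow> ('k \<Rightarrow> 'b \<Rightarrow> 'b)
    \<Rightarrow> ('v mag \<Rightarrow> 'b) \<Rightarrow> ('k, 'v) mpoly \<Rightarrow> 'b" where
  "lin_comb zero add smul ev \<Phi> = foldr (\<lambda>(c, t) acc. add (smul c (ev t)) acc) \<Phi> zero"

definition polylinear :: "nat \<Rightarrow> ('k, nat) mpoly \<Rightarrow> bool" where
  "polylinear n \<Phi> \<longleftrightarrow> (\<forall>(c, t) \<in> set \<Phi>. mset (leaves t) = mset [1..<Suc n])"

definition tri_ids :: "(nat \<times> ('k, nat) mpoly) set \<Rightarrow> 'b set \<Rightarrow> 'b \<Rightarrow> ('b \<Rightarrow> 'b \<Rightarrow> 'b)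
    \<Rightarrow> ('k \<Rightarrow> 'b \<Rightarrow> 'b) \<Rightarrow> ('b \<Rightarrow> 'b \<Rightarrow> 'b) \<Rightarrow> ('b \<Rightarrow> 'b \<Rightarrow> 'b) \<Rightarrow> ('b \<Rightarrow> 'b \<Rightarrow> 'b) \<Rightarrow> bool" where
  "tri_ids S C zero add smul l r p \<longleftrightarrow>
     (\<forall>a\<in>C. \<forall>b\<in>C. \<forall>c\<in>C. \<forall>f\<in>{l, r, p}. \<forall>g\<in>{l, r, p}.
        r (f a b) c = r (g a b) c \<and> l a (f b c) = l a (g b c)) \<and>
     (\<forall>(n, \<Phi>)\<in>S. \<forall>H. H \<noteq> {} \<longrightarrow> H \<subseteq> {1..n} \<longrightarrow>
        (\<forall>a. (\<forall>i. a i \<in> C) \<longrightarrow> lin_comb zero add smul (tri_mag_eval l r p H a) \<Phi> = zero))"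

definition bilinear_op :: "('k \<Rightarrow> 'a::ab_group_add \<Rightarrow> 'a) \<Rightarrow> ('a \<Rightarrow> 'a \<Rightarrow> 'a) \<Rightarrow> bool" where
  "bilinear_op scale m \<longleftrightarrow>
     (\<forall>a b c. m (a + b) c = m a c + m b c \<and> m a (b + c) = m a b + m a c) \<and>
     (\<forall>k a b. m (scale k a) b = scale k (m a b) \<and> m a (scale k b) = scale k (m a b))"

definition tri_Var_algebra :: "(nat \<times> ('k::field, nat) mpoly) set \<Rightarrow> ('k \<Rightarrow> 'a::ab_group_add \<Rightarrow> 'a)
    \<Rightarrow> ('a \<Rightarrow> 'a \<Rightarrow> 'a) \<Rightarrow> ('a \<Rightarrow> 'a \<Rightarrow> 'a) \<Rightarrow> ('a \<Rightarrow> 'a \<Rightarrow> 'a) \<Rightarrow> bool" where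
  "tri_Var_algebra S scale l r p \<longleftrightarrow>
     module scale \<and> bilinear_op scale l \<and> bilinear_op scale r \<and> bilinear_op scale p \<and>
     tri_ids S UNIV 0 (+) scale l r p"

datatype ('v, 'k) tm = TV 'v | TZ | TAdd "('v, 'k) tm" "('v, 'k) tm" | TSm 'k "('v, 'k) tm"
  | TMul "('v, 'k) tm" "('v, 'k) tm"

text \<open>The smallest congruence making the term algebra a k-algebra (vector space with bilinear
  product) satisfying all defining identities of Var (all substitution instances).\<close>
inductive fcong :: "(nat \<times> ('k::field, nat) mpoly) set \<Rightarrow> ('v, 'k) tm \<Rightarrow> ('v, 'k) tm \<Rightarrow> bool"
  for S where
  refl: "fcong S a a"
| sym: "fcong S a b \<Longrightarrow> fcong S b a"
| trans: "fcong S a b \<Longrightarrow> fcong S b c \<Longrightarrow> fcong S a c"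
| cong_add: "fcong S a a' \<Longrightarrow> fcong S b b' \<Longrightarrow> fcong S (TAdd a b) (TAdd a' b')"
| cong_sm: "fcong S a a' \<Longrightarrow> fcong S (TSm c a) (TSm c a')"
| cong_mul: "fcong S a a' \<Longrightarrow> fcong S b b' \<Longrightarrow> fcong S (TMul a b) (TMul a' b')"
| add_assoc: "fcong S (TAdd (TAdd a b) c) (TAdd a (TAdd b c))"
| add_comm: "fcong S (TAdd a b) (TAdd b a)"
| add_zero: "fcong S (TAdd TZ a) a"
| add_neg: "fcong S (TAdd a (TSm (-1) a)) TZ"
| sm_add: "fcong S (TSm c (TAdd a b)) (TAdd (TSm c a) (TSm c b))"
| add_sm: "fcong S (TSm (c + d) a) (TAdd (TSm c a) (TSm d a))"
| sm_sm: "fcong S (TSm c (TSm d a)) (TSm (c * d) a)"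
| sm_one: "fcong S (TSm 1 a) a"
| mul_add_l: "fcong S (TMul (TAdd a b) c) (TAdd (TMul a c) (TMul b c))"
| mul_add_r: "fcong S (TMul a (TAdd b c)) (TAdd (TMul a b) (TMul a c))"
| mul_sm_l: "fcong S (TMul (TSm c a) b) (TSm c (TMul a b))"
| mul_sm_r: "fcong S (TMul a (TSm c b)) (TSm c (TMul a b))"
| ident: "(n, \<Phi>) \<in> S \<Longrightarrow> fcong S (lin_comb TZ TAdd TSm (mag_eval TMul f) \<Phi>) TZ"

definition cls :: "(nat \<times> ('k::field, nat) mpoly) set \<Rightarrow> ('v, 'k) tm \<Rightarrow> ('v, 'k) tm set" where
  "cls S t = {s. fcong S t s}"

definition rep :: "('v, 'k) tm set \<Rightarrow> ('v, 'k) tm" where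
  "rep U = (SOME t. t \<in> U)"

definition zeroF :: "(nat \<times> ('k::field, nat) mpoly) set \<Rightarrow> ('v, 'k) tm set" where
  "zeroF S = cls S TZ"

definition addF :: "(nat \<times> ('k::field, nat) mpoly) set \<Rightarrow> ('v, 'k) tm set \<Rightarrow> ('v, 'k) tm set \<Rightarrow> ('v, 'k) tm set" where
  "addF S U W = cls S (TAdd (rep U) (rep W))"

definition smulF :: "(nat \<times> ('k::field, nat) mpoly) set \<Rightarrow> 'k \<Rightarrow> ('v, 'k) tm set \<Rightarrow> ('v, 'k) tm set" where
  "smulF S c U = cls S (TSm c (rep U))"

definition mulF :: "(nat \<times> ('k::field, nat) mpoly) set \<Rightarrow> ('v, 'k) tm set \<Rightarrow> ('v, 'k) tm set \<Rightarrow> ('v, 'k) tm set" where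
  "mulF S U W = cls S (TMul (rep U) (rep W))"

text \<open>Variables of F: Inl x stands for x, Inr x for the dotted copy x-dot.
  phi is the homomorphism with phi(x) = phi(x-dot) = x.\<close>
fun phiT :: "('x + 'x, 'k) tm \<Rightarrow> ('x + 'x, 'k) tm" where
  "phiT (TV v) = TV (Inl (case v of Inl x \<Rightarrow> x | Inr x \<Rightarrow> x))"
| "phiT TZ = TZ"
| "phiT (TAdd a b) = TAdd (phiT a) (phiT b)"
| "phiT (TSm c a) = TSm c (phiT a)"
| "phiT (TMul a b) = TMul (phiT a) (phiT b)"

definition phiF :: "(nat \<times> ('k::field, nat) mpoly) set \<Rightarrow> ('x + 'x, 'k) tm set \<Rightarrow> ('x + 'x, 'k) tm set" where
  "phiF S U = cls S (phiT (rep U))"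

definition vdashF :: "(nat \<times> ('k::field, nat) mpoly) set \<Rightarrow> ('x + 'x, 'k) tm set \<Rightarrow> ('x + 'x, 'k) tm set \<Rightarrow> ('x + 'x, 'k) tm set" where
  "vdashF S U W = mulF S (phiF S U) W"

definition dashvF :: "(nat \<times> ('k::field, nat) mpoly) set \<Rightarrow> ('x + 'x, 'k) tm set \<Rightarrow> ('x + 'x, 'k) tm set \<Rightarrow> ('x + 'x, 'k) tm set" where
  "dashvF S U W = mulF S U (phiF S W)"

definition perpF :: "(nat \<times> ('k::field, nat) mpoly) set \<Rightarrow> ('x + 'x, 'k) tm set \<Rightarrow> ('x + 'x, 'k) tm set \<Rightarrow> ('x + 'x, 'k) tm set" where
  "perpF S U W = mulF S U W"

definition dotF :: "(nat \<times> ('k::field, nat) mpoly) set \<Rightarrow> 'x \<Rightarrow> ('x + 'x, 'k) tm set" where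
  "dotF S x = cls S (TV (Inr x))"

inductive_set Vset :: "(nat \<times> ('k::field, nat) mpoly) set \<Rightarrow> 'x set \<Rightarrow> ('x + 'x, 'k) tm set set"
  for S X where
  gen: "x \<in> X \<Longrightarrow> dotF S x \<in> Vset S X"
| zero: "zeroF S \<in> Vset S X"
| add: "U \<in> Vset S X \<Longrightarrow> W \<in> Vset S X \<Longrightarrow> addF S U W \<in> Vset S X"
| smul: "U \<in> Vset S X \<Longrightarrow> smulF S c U \<in> Vset S X"
| dashv: "U \<in> Vset S X \<Longrightarrow> W \<in> Vset S X \<Longrightarrow> dashvF S U W \<in> Vset S X"
| vdash: "U \<in> Vset S X \<Longrightarrow> W \<in> Vset S X \<Longrightarrow> vdashF S U W \<in> Vset S X"
| perp: "U \<in> Vset S X \<Longrightarrow> W \<in> Vset S X \<Longrightarrow> perpF S U W \<in> Vset S X"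

definition tri_hom_V :: "(nat \<times> ('k::field, nat) mpoly) set \<Rightarrow> 'x set \<Rightarrow> ('k \<Rightarrow> 'a::ab_group_add \<Rightarrow> 'a)
    \<Rightarrow> ('a \<Rightarrow> 'a \<Rightarrow> 'a) \<Rightarrow> ('a \<Rightarrow> 'a \<Rightarrow> 'a) \<Rightarrow> ('a \<Rightarrow> 'a \<Rightarrow> 'a) \<Rightarrow> (('x + 'x, 'k) tm set \<Rightarrow> 'a) \<Rightarrow> bool" where
  "tri_hom_V S X scale l r p \<chi> \<longleftrightarrow>
     (\<forall>U\<in>Vset S X. \<forall>W\<in>Vset S X.
        \<chi> (addF S U W) = \<chi> U + \<chi> W \<and>
        \<chi> (dashvF S U W) = l (\<chi> U) (\<chi> W) \<and>
        \<chi> (vdashF S U W) = r (\<chi> U) (\<chi> W) \<and>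
        \<chi> (perpF S U W) = p (\<chi> U) (\<chi> W)) \<and>
     (\<forall>c. \<forall>U\<in>Vset S X. \<chi> (smulF S c U) = scale c (\<chi> U))"

end

theory Submission
  imports Defs
begin

lemma lin_comb_Nil[simp]: "lin_comb z a s e [] = z"
  by (simp add: lin_comb_def)
lemma lin_comb_Cons[simp]: "lin_comb z a s e ((c,t)#\<Phi>) = a (s c (e t)) (lin_comb z a s e \<Phi>)"
  by (simp add: lin_comb_def)
lemma lin_comb_cong: "(\<And>c t. (c,t) \<in> set \<Phi> \<Longrightarrow> e1 t = e2 t) \<Longrightarrow> lin_comb z a s e1 \<Phi> = lin_comb z a s e2 \<Phi>"
  by (induction \<Phi>) (simp, metis list.set_intros lin_comb_Cons prod.collapse)

lemma mag_eval_cong: "(\<And>i. i \<in> set (leaves t) \<Longrightarrow> f i = g i) \<Longrightarrow> mag_eval m f t = mag_eval m g t"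
  by (induction t) auto

lemma leaves_ne: "leaves t \<noteq> []"
  by (induction t) auto

lemma cls_eq_iff: "cls S a = cls S b \<longleftrightarrow> fcong S a b"
proof
  assume "cls S a = cls S b"
  then have "b \<in> cls S a" by (simp add: cls_def fcong.refl)
  then show "fcong S a b" by (simp add: cls_def)
next
  assume "fcong S a b"
  then show "cls S a = cls S b" unfolding cls_def
    by (auto intro: fcong.trans fcong.sym)
qed

lemma rep_cls: "fcong S t (rep (cls S t))"
  unfolding rep_def cls_def by (metis (mono_tags) fcong.refl mem_Collect_eq someI)

lemma cls_rep_cls[simp]: "cls S (rep (cls S t)) = cls S t"
  using rep_cls cls_eq_iff fcong.sym by metis

lemma Vset_cls: "U \<in> Vset S X \<Longrightarrow> U = cls S (rep U)"
  by (induction rule: Vset.induct)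
     (simp_all add: dotF_def zeroF_def addF_def smulF_def dashvF_def vdashF_def perpF_def mulF_def)

lemma phiT_idem[simp]: "phiT (phiT t) = phiT t"
  by (induction t) auto

lemma phiT_mag: "phiT (mag_eval TMul f t) = mag_eval TMul (phiT \<circ> f) t"
  by (induction t) auto

lemma phiT_lin: "phiT (lin_comb TZ TAdd TSm ev \<Phi>) = lin_comb TZ TAdd TSm (phiT \<circ> ev) \<Phi>"
  by (induction \<Phi>) auto

lemma fcong_phiT: "fcong S a b \<Longrightarrow> fcong S (phiT a) (phiT b)"
proof (induction rule: fcong.induct)
  case (ident n \<Phi> f)
  have "phiT \<circ> mag_eval TMul f = mag_eval TMul (phiT \<circ> f)"
    by (rule ext) (simp add: phiT_mag)
  then show ?case using fcong.ident[OF ident, of "phiT \<circ> f"] by (simp add: phiT_lin)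
qed (auto intro: fcong.intros)

lemma phiF_ops:
  fixes a b :: "('x + 'x, 'k::field) tm set"
  assumes "f \<in> {dashvF S, vdashF S, perpF S}"
  shows "phiF S (f a b) = cls S (TMul (phiT (rep a)) (phiT (rep b)))"
proof -
  have pr: "fcong S (phiT (rep (cls S t))) (phiT t)" for t
    by (rule fcong_phiT) (rule fcong.sym[OF rep_cls])
  have pm: "fcong S (phiT (rep (cls S (TMul x y)))) (TMul (phiT x) (phiT y))" for x y :: "('x + 'x, 'k) tm"
    using pr[of "TMul x y"] by simp
  have c1: "fcong S (phiT (rep (cls S (TMul (rep a) (rep (cls S (phiT (rep b))))))))
      (TMul (phiT (rep a)) (phiT (rep b)))"
  proof -
    have "fcong S (phiT (rep (cls S (TMul x (rep (cls S t)))))) (TMul (phiT x) (phiT t))"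
      for x t :: "('x + 'x, 'k) tm"
      using fcong.trans[OF pm fcong.cong_mul[OF fcong.refl pr]] .
    from this[of "rep a" "phiT (rep b)"] show ?thesis by simp
  qed
  have c2: "fcong S (phiT (rep (cls S (TMul (rep (cls S (phiT (rep a)))) (rep b)))))
      (TMul (phiT (rep a)) (phiT (rep b)))"
  proof -
    have "fcong S (phiT (rep (cls S (TMul (rep (cls S t)) x)))) (TMul (phiT t) (phiT x))"
      for x t :: "('x + 'x, 'k) tm"
      using fcong.trans[OF pm fcong.cong_mul[OF pr fcong.refl]] .
    from this[of "phiT (rep a)" "rep b"] show ?thesis by simp
  qed
  have c3: "fcong S (phiT (rep (cls S (TMul (rep a) (rep b)))))
      (TMul (phiT (rep a)) (phiT (rep b)))"
    by (rule pm)
  from assms consider "f = dashvF S" | "f = vdashF S" | "f = perpF S" by blast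
  then show ?thesis
  proof cases
    case 1 then show ?thesis using c1 unfolding phiF_def dashvF_def mulF_def cls_eq_iff by simp
  next
    case 2 then show ?thesis using c2 unfolding phiF_def vdashF_def mulF_def cls_eq_iff by simp
  next
    case 3 then show ?thesis using c3 unfolding phiF_def perpF_def mulF_def cls_eq_iff by simp
  qed
qed

lemma phiF_cls: "phiF S (cls S t) = cls S (phiT t)"
  unfolding phiF_def cls_eq_iff by (rule fcong.sym, rule fcong_phiT, rule rep_cls)

lemma mulF_cls: "mulF S (cls S a) (cls S b) = cls S (TMul a b)"
  unfolding mulF_def cls_eq_iff by (intro fcong.cong_mul fcong.sym[OF rep_cls])

lemma addF_cls: "addF S (cls S a) (cls S b) = cls S (TAdd a b)"
  unfolding addF_def cls_eq_iff by (intro fcong.cong_add fcong.sym[OF rep_cls])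

lemma V_conj1:
  fixes a b c :: "('x + 'x, 'k::field) tm set"
  assumes "f \<in> {dashvF S, vdashF S, perpF S}" "g \<in> {dashvF S, vdashF S, perpF S}"
  shows "vdashF S (f a b) c = vdashF S (g a b) c \<and> dashvF S a (f b c) = dashvF S a (g b c)"
proof -
  have e1: "phiF S (f a b) = phiF S (g a b)" "phiF S (f b c) = phiF S (g b c)"
    by (simp only: phiF_ops[OF assms(1)] phiF_ops[OF assms(2)])+
  show ?thesis unfolding vdashF_def dashvF_def e1 by simp
qed

lemma D1:
  fixes a :: "nat \<Rightarrow> ('x + 'x, 'k::field) tm set"
  assumes "\<And>i. a i = cls S (rep (a i))"
  shows "phiF S (tri_mag_eval (dashvF S) (vdashF S) (perpF S) H a t)
     = cls S (mag_eval TMul (\<lambda>i. phiT (rep (a i))) t)"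
proof (induction t)
  case (Leaf v)
  then show ?case by (simp add: phiF_def)
next
  case (Node t1 t2)
  let ?T = "tri_mag_eval (dashvF S) (vdashF S) (perpF S) H a"
  define op :: "('x + 'x, 'k) tm set \<Rightarrow> _" where "op = (if set (leaves t1) \<inter> H \<noteq> {} \<and> set (leaves t2) \<inter> H \<noteq> {} then perpF S
     else if set (leaves t2) \<inter> H \<noteq> {} then vdashF S else dashvF S)"
  have op: "op \<in> {dashvF S, vdashF S, perpF S}" unfolding op_def by simp
  have eq: "?T (Node t1 t2) = op (?T t1) (?T t2)"
    unfolding op_def by (simp only: tri_mag_eval.simps Let_def)
  have "phiF S (?T (Node t1 t2)) = cls S (TMul (phiT (rep (?T t1))) (phiT (rep (?T t2))))"
    using eq phiF_ops[OF op] by simp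
  also have "\<dots> = mulF S (phiF S (?T t1)) (phiF S (?T t2))"
    by (simp add: mulF_cls phiF_def)
  also have "\<dots> = cls S (mag_eval TMul (\<lambda>i. phiT (rep (a i))) (Node t1 t2))"
    using Node by (simp add: mulF_cls)
  finally show ?case .
qed

lemma D2:
  fixes a :: "nat \<Rightarrow> ('x + 'x, 'k::field) tm set"
  assumes "\<And>i. a i = cls S (rep (a i))"
  shows "set (leaves t) \<inter> H \<noteq> {} \<Longrightarrow> tri_mag_eval (dashvF S) (vdashF S) (perpF S) H a t
     = cls S (mag_eval TMul (\<lambda>i. if i \<in> H then rep (a i) else phiT (rep (a i))) t)"
proof (induction t)
  case (Leaf v)
  then show ?case using assms[of v] by simp
next
  case (Node t1 t2)
  let ?T = "tri_mag_eval (dashvF S) (vdashF S) (perpF S) H a"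
  let ?g = "\<lambda>i. if i \<in> H then rep (a i) else phiT (rep (a i))"
  have un: "mag_eval TMul (\<lambda>i. phiT (rep (a i))) s = mag_eval TMul ?g s"
    if "set (leaves s) \<inter> H = {}" for s
    using that by (intro mag_eval_cong) auto
  consider (both) "set (leaves t1) \<inter> H \<noteq> {}" "set (leaves t2) \<inter> H \<noteq> {}"
    | (right) "set (leaves t1) \<inter> H = {}" "set (leaves t2) \<inter> H \<noteq> {}"
    | (left) "set (leaves t1) \<inter> H \<noteq> {}" "set (leaves t2) \<inter> H = {}"
    using Node.prems by auto
  then show ?case
  proof cases
    case both
    have i1: "?T t1 = cls S (mag_eval TMul ?g t1)" using Node.IH(1) both(1) by simp
    have i2: "?T t2 = cls S (mag_eval TMul ?g t2)" using Node.IH(2) both(2) by simp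
    have "?T (Node t1 t2) = perpF S (?T t1) (?T t2)" using both by simp
    also have "\<dots> = mulF S (?T t1) (?T t2)" by (rule perpF_def)
    also have "\<dots> = cls S (mag_eval TMul ?g (Node t1 t2))"
      by (simp only: i1 i2 mulF_cls mag_eval.simps)
    finally show ?thesis .
  next
    case right
    have i1: "phiF S (?T t1) = cls S (mag_eval TMul ?g t1)"
      using D1[where a=a and S=S and H=H and t=t1, OF assms] un[OF right(1)] by simp
    have i2: "?T t2 = cls S (mag_eval TMul ?g t2)" using Node.IH(2) right(2) by simp
    have "?T (Node t1 t2) = vdashF S (?T t1) (?T t2)" using right by simp
    also have "\<dots> = mulF S (phiF S (?T t1)) (?T t2)" by (rule vdashF_def)
    also have "\<dots> = cls S (mag_eval TMul ?g (Node t1 t2))"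
      by (simp only: i1 i2 mulF_cls mag_eval.simps)
    finally show ?thesis .
  next
    case left
    have i2: "phiF S (?T t2) = cls S (mag_eval TMul ?g t2)"
      using D1[where a=a and S=S and H=H and t=t2, OF assms] un[OF left(2)] by simp
    have i1: "?T t1 = cls S (mag_eval TMul ?g t1)" using Node.IH(1) left(1) by simp
    have "?T (Node t1 t2) = dashvF S (?T t1) (?T t2)" using left by simp
    also have "\<dots> = mulF S (?T t1) (phiF S (?T t2))" by (rule dashvF_def)
    also have "\<dots> = cls S (mag_eval TMul ?g (Node t1 t2))"
      by (simp only: i1 i2 mulF_cls mag_eval.simps)
    finally show ?thesis .
  qed
qed

lemma D3:
  "(\<And>c t. (c,t) \<in> set \<Phi> \<Longrightarrow> ev t = cls S (G t)) \<Longrightarrow>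
   lin_comb (zeroF S) (addF S) (smulF S) ev \<Phi> = cls S (lin_comb TZ TAdd TSm G \<Phi>)"
proof (induction \<Phi>)
  case Nil
  then show ?case by (simp add: zeroF_def)
next
  case (Cons ct \<Phi>)
  obtain c t where ct: "ct = (c,t)" by fastforce
  have "smulF S c (ev t) = cls S (TSm c (G t))"
    using Cons.prems[of c t] ct unfolding smulF_def cls_eq_iff
    by (auto intro: fcong.cong_sm fcong.sym[OF rep_cls])
  moreover have "lin_comb (zeroF S) (addF S) (smulF S) ev \<Phi> = cls S (lin_comb TZ TAdd TSm G \<Phi>)"
    using Cons by auto
  ultimately show ?case using ct by (simp add: addF_cls)
qed

lemma V_tri_ids:
  fixes S :: "(nat \<times> ('k::field, nat) mpoly) set" and X :: "'x set"
  assumes poly: "\<forall>(n, \<Phi>) \<in> S. polylinear n \<Phi>"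
  shows "tri_ids S (Vset S X) (zeroF S) (addF S) (smulF S) (dashvF S) (vdashF S) (perpF S)"
  unfolding tri_ids_def
  apply (rule conjI)
  subgoal by (intro ballI, rule V_conj1; assumption)
  subgoal
  proof (clarify)
  fix n \<Phi> and H :: "nat set" and a :: "nat \<Rightarrow> ('x + 'x, 'k) tm set"
  assume mem: "(n, \<Phi>) \<in> S" and H: "H \<noteq> {}" "H \<subseteq> {1..n}" and aV: "\<forall>i. a i \<in> Vset S X"
  have pl: "polylinear n \<Phi>" using poly mem by auto
  have ac: "\<And>i. a i = cls S (rep (a i))" using aV Vset_cls by blast
  let ?g = "\<lambda>i. if i \<in> H then rep (a i) else phiT (rep (a i))"
  have "lin_comb (zeroF S) (addF S) (smulF S) (tri_mag_eval (dashvF S) (vdashF S) (perpF S) H a) \<Phi>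
      = cls S (lin_comb TZ TAdd TSm (mag_eval TMul ?g) \<Phi>)"
  proof (rule D3)
    fix c t assume "(c, t) \<in> set \<Phi>"
    then have "mset (leaves t) = mset [1..<Suc n]" using pl unfolding polylinear_def by auto
    then have "set (leaves t) = {1..n}"
      by (metis atLeastLessThanSuc_atLeastAtMost set_mset_mset set_upt)
    then have "set (leaves t) \<inter> H \<noteq> {}" using H by auto
    then show "tri_mag_eval (dashvF S) (vdashF S) (perpF S) H a t = cls S (mag_eval TMul ?g t)"
      by (rule D2[OF ac])
  qed
  also have "\<dots> = zeroF S" unfolding zeroF_def cls_eq_iff
    using mem by (rule fcong.ident)
  finally show "lin_comb (zeroF S) (addF S) (smulF S)
     (tri_mag_eval (dashvF S) (vdashF S) (perpF S) H a) \<Phi> = zeroF S" .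
  qed
  done

definition addB :: "'a::ab_group_add \<times> 'a \<Rightarrow> 'a \<times> 'a \<Rightarrow> 'a \<times> 'a" where
  "addB x y = (fst x + fst y, snd x + snd y)"
definition smB :: "('k \<Rightarrow> 'a \<Rightarrow> 'a) \<Rightarrow> 'k \<Rightarrow> 'a \<times> 'a \<Rightarrow> 'a \<times> 'a" where
  "smB scale k x = (scale k (fst x), scale k (snd x))"
definition mulB :: "('a \<Rightarrow> 'a \<Rightarrow> 'a) \<Rightarrow> ('a \<Rightarrow> 'a \<Rightarrow> 'a) \<Rightarrow> ('a \<Rightarrow> 'a \<Rightarrow> 'a)
    \<Rightarrow> 'a::ab_group_add \<times> 'a \<Rightarrow> 'a \<times> 'a \<Rightarrow> 'a \<times> 'a" where
  "mulB l r p x y = (p (fst x) (fst y), r (fst x) (snd y) + l (snd x) (fst y) + p (snd x) (snd y))"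

fun psi :: "('k \<Rightarrow> 'a::ab_group_add \<Rightarrow> 'a) \<Rightarrow> ('a \<Rightarrow> 'a \<Rightarrow> 'a) \<Rightarrow> ('a \<Rightarrow> 'a \<Rightarrow> 'a) \<Rightarrow> ('a \<Rightarrow> 'a \<Rightarrow> 'a)
    \<Rightarrow> ('v \<Rightarrow> 'a \<times> 'a) \<Rightarrow> ('v, 'k) tm \<Rightarrow> 'a \<times> 'a" where
  "psi scale l r p \<beta> (TV v) = \<beta> v"
| "psi scale l r p \<beta> TZ = (0, 0)"
| "psi scale l r p \<beta> (TAdd a b) = addB (psi scale l r p \<beta> a) (psi scale l r p \<beta> b)"
| "psi scale l r p \<beta> (TSm c a) = smB scale c (psi scale l r p \<beta> a)"
| "psi scale l r p \<beta> (TMul a b) = mulB l r p (psi scale l r p \<beta> a) (psi scale l r p \<beta> b)"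

lemma bil_simps:
  assumes b: "bilinear_op scale m" and md: "module scale"
  shows "m 0 y = 0" "m x 0 = 0" "m (x+y) z = m x z + m y z" "m z (x+y) = m z x + m z y"
    "m (scale k x) y = scale k (m x y)" "m x (scale k y) = scale k (m x y)"
proof -
  show a1: "m (x+y) z = m x z + m y z" "m z (x+y) = m z x + m z y"
    "m (scale k x) y = scale k (m x y)" "m x (scale k y) = scale k (m x y)"
    using b unfolding bilinear_op_def by auto
  have "m (0+0) y = m 0 y + m 0 y" using b unfolding bilinear_op_def by blast
  then show "m 0 y = 0" by simp
  have "m x (0+0) = m x 0 + m x 0" using b unfolding bilinear_op_def by blast
  then show "m x 0 = 0" by simp
qed

lemma tri_mag_unmarked: "set (leaves t) \<inter> H = {} \<Longrightarrow> tri_mag_eval l r p H c t = mag_eval l c t"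
  by (induction t) (auto simp: Let_def Int_Un_distrib2)

lemma tri_mag_full: "set (leaves t) \<subseteq> H \<Longrightarrow> tri_mag_eval l r p H c t = mag_eval p c t"
proof (induction t)
  case (Node t1 t2)
  have "set (leaves t1) \<inter> H \<noteq> {}" "set (leaves t2) \<inter> H \<noteq> {}"
    using Node.prems leaves_ne[of t1] leaves_ne[of t2]
    by (auto simp: neq_Nil_conv)
  then show ?case using Node by (auto simp: Let_def)
qed simp

lemma fst_mag: "fst (mag_eval (mulB l r p) b t) = mag_eval p (\<lambda>i. fst (b i)) t"
  by (induction t) (simp_all add: mulB_def)

lemma fst_lin: "fst (lin_comb (0,0) addB (smB scale) ev \<Phi>) = lin_comb 0 (+) scale (\<lambda>t. fst (ev t)) \<Phi>"
  by (induction \<Phi>) (auto simp: addB_def smB_def)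
lemma snd_lin: "snd (lin_comb (0,0) addB (smB scale) ev \<Phi>) = lin_comb 0 (+) scale (\<lambda>t. snd (ev t)) \<Phi>"
  by (induction \<Phi>) (auto simp: addB_def smB_def)

lemma lin_comb_add: "module scale \<Longrightarrow>
  lin_comb 0 (+) scale (\<lambda>t. e1 t + e2 t) \<Phi> = lin_comb 0 (+) scale e1 \<Phi> + lin_comb 0 (+) scale e2 \<Phi>"
  by (induction \<Phi>) (auto simp: module.scale_right_distrib algebra_simps)

lemma lin_comb_zero: "module scale \<Longrightarrow> lin_comb 0 (+) scale (\<lambda>t. 0) \<Phi> = 0"
  by (induction \<Phi>) (auto simp: module.scale_zero_right)

lemma mag_eval_upd_notin: "k \<notin> set (leaves t) \<Longrightarrow> mag_eval m (b(k:=u)) t = mag_eval m b t"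
  by (rule mag_eval_cong) auto

locale triA =
  fixes S :: "(nat \<times> ('k::field, nat) mpoly) set"
    and scale :: "'k \<Rightarrow> 'a::ab_group_add \<Rightarrow> 'a"
    and l r p :: "'a \<Rightarrow> 'a \<Rightarrow> 'a"
  assumes poly: "\<forall>(n, \<Phi>) \<in> S. polylinear n \<Phi>"
    and alg: "tri_Var_algebra S scale l r p"
begin

lemma md: "module scale" using alg unfolding tri_Var_algebra_def by blast
lemma bl: "bilinear_op scale l" using alg unfolding tri_Var_algebra_def by blast
lemma br: "bilinear_op scale r" using alg unfolding tri_Var_algebra_def by blast
lemma bp: "bilinear_op scale p" using alg unfolding tri_Var_algebra_def by blast
lemma tids: "tri_ids S UNIV 0 (+) scale l r p" using alg unfolding tri_Var_algebra_def by blast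

lemmas ls[simp] = bil_simps[OF bl md]
lemmas rs[simp] = bil_simps[OF br md]
lemmas ps[simp] = bil_simps[OF bp md]
lemmas ms[simp] = module.scale_right_distrib[OF md] module.scale_zero_right[OF md]

lemma idr: "r (p a b) c = r (r a b) c" "r (l a b) c = r (r a b) c"
  and idl: "l a (p b c) = l a (r b c)" "l a (l b c) = l a (r b c)"
  using tids unfolding tri_ids_def by blast+

lemma tid2:
  assumes "(n, \<Phi>) \<in> S" "H \<noteq> {}" "H \<subseteq> {1..n}"
  shows "lin_comb 0 (+) scale (tri_mag_eval l r p H a) \<Phi> = 0"
proof -
  have "\<forall>(n, \<Phi>)\<in>S. \<forall>H. H \<noteq> {} \<longrightarrow> H \<subseteq> {1..n} \<longrightarrow>
        (\<forall>a. (\<forall>i. a i \<in> UNIV) \<longrightarrow> lin_comb 0 (+) scale (tri_mag_eval l r p H a) \<Phi> = 0)"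
    using tids unfolding tri_ids_def by (rule conjunct2)
  then have "case (n, \<Phi>) of (n, \<Phi>) \<Rightarrow> \<forall>H. H \<noteq> {} \<longrightarrow> H \<subseteq> {1..n} \<longrightarrow>
        (\<forall>a. (\<forall>i. a i \<in> UNIV) \<longrightarrow> lin_comb 0 (+) scale (tri_mag_eval l r p H a) \<Phi> = 0)"
    using assms(1) by (rule bspec)
  then show ?thesis using assms(2,3) by simp
qed

lemma ctx: "r (mag_eval p c s) y = r (mag_eval l c s) y \<and> l y (mag_eval p c s) = l y (mag_eval l c s)"
proof (induction s arbitrary: y)
  case (Node s1 s2)
  let ?P = "mag_eval p c" and ?L = "mag_eval l c"
  have "r (?P (Node s1 s2)) y = r (r (?P s1) (?P s2)) y" by (simp add: idr)
  also have "\<dots> = r (r (?L s1) (?P s2)) y" using Node.IH(1) by simp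
  also have "\<dots> = r (l (?L s1) (?P s2)) y" by (simp add: idr)
  also have "\<dots> = r (l (?L s1) (?L s2)) y" using Node.IH(2) by simp
  finally have 1: "r (?P (Node s1 s2)) y = r (?L (Node s1 s2)) y" by simp
  have "l y (?P (Node s1 s2)) = l y (r (?P s1) (?P s2))" by (simp add: idl)
  also have "\<dots> = l y (r (?P s1) (?L s2))" by (metis Node.IH(2) idl)
  also have "\<dots> = l y (r (?L s1) (?L s2))" using Node.IH(1) by simp
  also have "\<dots> = l y (l (?L s1) (?L s2))" by (simp add: idl)
  finally have 2: "l y (?P (Node s1 s2)) = l y (?L (Node s1 s2))" by simp
  from 1 2 show ?case by simp
qed simp

lemma mulB_simp: "mulB l r p (x0, x1) (y0, y1) = (p x0 y0, r x0 y1 + l x1 y0 + p x1 y1)"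
  by (simp add: mulB_def)

lemma EV:
  assumes "\<forall>i\<in>set (leaves t). (i \<in> H \<longrightarrow> b i = (0, c i)) \<and> (i \<notin> H \<longrightarrow> b i = (c i, 0))"
  shows "(set (leaves t) \<inter> H = {} \<longrightarrow> mag_eval (mulB l r p) b t = (mag_eval p c t, 0)) \<and>
    (set (leaves t) \<inter> H \<noteq> {} \<longrightarrow> mag_eval (mulB l r p) b t = (0, tri_mag_eval l r p H c t))"
  using assms
proof (induction t)
  case (Leaf v)
  then show ?case by auto
next
  case (Node t1 t2)
  have h1: "\<forall>i\<in>set (leaves t1). (i \<in> H \<longrightarrow> b i = (0, c i)) \<and> (i \<notin> H \<longrightarrow> b i = (c i, 0))"
    and h2: "\<forall>i\<in>set (leaves t2). (i \<in> H \<longrightarrow> b i = (0, c i)) \<and> (i \<notin> H \<longrightarrow> b i = (c i, 0))"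
    using Node.prems by auto
  note I1 = Node.IH(1)[OF h1] and I2 = Node.IH(2)[OF h2]
  consider (none) "set (leaves t1) \<inter> H = {}" "set (leaves t2) \<inter> H = {}"
    | (both) "set (leaves t1) \<inter> H \<noteq> {}" "set (leaves t2) \<inter> H \<noteq> {}"
    | (right) "set (leaves t1) \<inter> H = {}" "set (leaves t2) \<inter> H \<noteq> {}"
    | (left) "set (leaves t1) \<inter> H \<noteq> {}" "set (leaves t2) \<inter> H = {}"
    by blast
  then show ?case
  proof cases
    case none
    then show ?thesis using I1 I2 by (simp add: mulB_simp Int_Un_distrib2)
  next
    case both
    then show ?thesis using I1 I2 by (simp add: mulB_simp Let_def Int_Un_distrib2)
  next
    case right
    then show ?thesis using I1 I2 by (simp add: mulB_simp Let_def Int_Un_distrib2 ctx tri_mag_unmarked[OF right(1)])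
  next
    case left
    then show ?thesis using I1 I2 by (simp add: mulB_simp Let_def Int_Un_distrib2 ctx tri_mag_unmarked[OF left(2)])
  qed
qed

lemma leaves_poly:
  assumes "(n, \<Phi>) \<in> S" "(c, t) \<in> set \<Phi>"
  shows "mset (leaves t) = mset [1..<Suc n]" "set (leaves t) = {1..n}"
proof -
  show m: "mset (leaves t) = mset [1..<Suc n]" using poly assms unfolding polylinear_def by fastforce
  then show "set (leaves t) = {1..n}"
    by (metis atLeastLessThanSuc_atLeastAtMost set_mset_mset set_upt)
qed

lemma snd_pure:
  assumes mem: "(n, \<Phi>) \<in> S" and pure: "\<forall>i\<in>{1..n}. snd (b i) = 0 \<or> fst (b i) = 0"
  shows "snd (lin_comb (0,0) addB (smB scale) (mag_eval (mulB l r p) b) \<Phi>) = 0"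
proof -
  define H where "H = {i\<in>{1..n}. fst (b i) = 0}"
  define c where "c i = (if i \<in> H then snd (b i) else fst (b i))" for i
  have hb: "\<forall>i\<in>set (leaves t). (i \<in> H \<longrightarrow> b i = (0, c i)) \<and> (i \<notin> H \<longrightarrow> b i = (c i, 0))"
    if "set (leaves t) \<subseteq> {1..n}" for t
    using that pure unfolding H_def c_def by (auto simp: prod_eq_iff)
  show ?thesis
  proof (cases "H = {}")
    case True
    have "lin_comb 0 (+) scale (\<lambda>t. snd (mag_eval (mulB l r p) b t)) \<Phi> = lin_comb 0 (+) scale (\<lambda>t. 0) \<Phi>"
    proof (rule lin_comb_cong)
      fix d t assume "(d, t) \<in> set \<Phi>"
      then have "set (leaves t) = {1..n}" using leaves_poly mem by blast
      then show "snd (mag_eval (mulB l r p) b t) = 0" using EV[OF hb] True by simp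
    qed
    then show ?thesis by (simp add: snd_lin lin_comb_zero[OF md])
  next
    case False
    have "lin_comb 0 (+) scale (\<lambda>t. snd (mag_eval (mulB l r p) b t)) \<Phi> =
        lin_comb 0 (+) scale (tri_mag_eval l r p H c) \<Phi>"
    proof (rule lin_comb_cong)
      fix d t assume "(d, t) \<in> set \<Phi>"
      then have st: "set (leaves t) = {1..n}" using leaves_poly mem by blast
      then have "set (leaves t) \<inter> H \<noteq> {}" using False unfolding H_def by auto
      then show "snd (mag_eval (mulB l r p) b t) = tri_mag_eval l r p H c t"
        using EV[OF hb] st by simp
    qed
    also have "\<dots> = 0" by (rule tid2[OF mem False]) (auto simp: H_def)
    finally show ?thesis by (simp add: snd_lin)
  qed
qed

lemma mulB_add_l: "mulB l r p (addB x y) z = addB (mulB l r p x z) (mulB l r p y z)"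
  by (simp add: mulB_def addB_def algebra_simps)
lemma mulB_add_r: "mulB l r p z (addB x y) = addB (mulB l r p z x) (mulB l r p z y)"
  by (simp add: mulB_def addB_def algebra_simps)

lemma mag_lin:
  "count (mset (leaves t)) k = 1 \<Longrightarrow>
   mag_eval (mulB l r p) (b(k := addB u v)) t = addB (mag_eval (mulB l r p) (b(k:=u)) t) (mag_eval (mulB l r p) (b(k:=v)) t)"
proof (induction t)
  case (Leaf x)
  then show ?case by (auto split: if_splits)
next
  case (Node t1 t2)
  have "count (mset (leaves t1)) k + count (mset (leaves t2)) k = 1" using Node.prems by simp
  then have "count (mset (leaves t1)) k = 1 \<and> count (mset (leaves t2)) k = 0 \<or>
      count (mset (leaves t2)) k = 1 \<and> count (mset (leaves t1)) k = 0" by linarith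
  then consider "count (mset (leaves t1)) k = 1" "k \<notin> set (leaves t2)"
    | "count (mset (leaves t2)) k = 1" "k \<notin> set (leaves t1)"
    by (metis count_mset_0_iff)
  then show ?case
  proof cases
    case 1
    have e: "\<And>w. mag_eval (mulB l r p) (b(k:=w)) t2 = mag_eval (mulB l r p) b t2"
      using 1(2) by (rule mag_eval_upd_notin)
    show ?thesis by (simp only: mag_eval.simps e Node.IH(1)[OF 1(1)] mulB_add_l)
  next
    case 2
    have e: "\<And>w. mag_eval (mulB l r p) (b(k:=w)) t1 = mag_eval (mulB l r p) b t1"
      using 2(2) by (rule mag_eval_upd_notin)
    show ?thesis by (simp only: mag_eval.simps e Node.IH(2)[OF 2(1)] mulB_add_r)
  qed
qed

lemma snd_K:
  assumes mem: "(n, \<Phi>) \<in> S"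
  shows "finite K \<Longrightarrow> \<forall>b. (\<forall>i\<in>{1..n} - K. snd (b i) = 0 \<or> fst (b i) = 0) \<longrightarrow>
     snd (lin_comb (0,0) addB (smB scale) (mag_eval (mulB l r p) b) \<Phi>) = 0"
proof (induction K rule: finite_induct)
  case empty
  then show ?case using snd_pure[OF mem] by simp
next
  case (insert k K)
  show ?case
  proof (intro allI impI)
    fix b :: "nat \<Rightarrow> 'a \<times> 'a"
    assume pb: "\<forall>i\<in>{1..n} - insert k K. snd (b i) = 0 \<or> fst (b i) = 0"
    show "snd (lin_comb (0,0) addB (smB scale) (mag_eval (mulB l r p) b) \<Phi>) = 0"
    proof (cases "k \<in> {1..n}")
      case False
      then have "\<forall>i\<in>{1..n} - K. snd (b i) = 0 \<or> fst (b i) = 0" using pb by auto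
      then show ?thesis using insert.IH by blast
    next
      case True
      define b1 where "b1 = b(k := (fst (b k), 0))"
      define b2 where "b2 = b(k := (0, snd (b k)))"
      have p1: "\<forall>i\<in>{1..n} - K. snd (b1 i) = 0 \<or> fst (b1 i) = 0" using pb unfolding b1_def by auto
      have p2: "\<forall>i\<in>{1..n} - K. snd (b2 i) = 0 \<or> fst (b2 i) = 0" using pb unfolding b2_def by auto
      have bb: "b = b(k := addB (fst (b k), 0) (0, snd (b k)))" by (simp add: addB_def)
      have "lin_comb 0 (+) scale (\<lambda>t. snd (mag_eval (mulB l r p) b t)) \<Phi> =
          lin_comb 0 (+) scale (\<lambda>t. snd (mag_eval (mulB l r p) b1 t) + snd (mag_eval (mulB l r p) b2 t)) \<Phi>"
      proof (rule lin_comb_cong)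
        fix d t assume "(d, t) \<in> set \<Phi>"
        then have "mset (leaves t) = mset [1..<Suc n]" using leaves_poly mem by blast
        then have "count (mset (leaves t)) k = 1" using True
          by (simp add: distinct_count_atmost_1[THEN iffD1, OF distinct_upt])
        from mag_lin[OF this, of b "(fst (b k), 0)" "(0, snd (b k))"]
        show "snd (mag_eval (mulB l r p) b t) = snd (mag_eval (mulB l r p) b1 t) + snd (mag_eval (mulB l r p) b2 t)"
          unfolding b1_def b2_def by (subst bb) (simp add: addB_def)
      qed
      then show ?thesis using insert.IH p1 p2 by (simp add: snd_lin lin_comb_add[OF md])
    qed
  qed
qed

lemma B_ident:
  assumes mem: "(n, \<Phi>) \<in> S"
  shows "lin_comb (0,0) addB (smB scale) (mag_eval (mulB l r p) b) \<Phi> = (0, 0)"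
proof (rule prod_eqI)
  show "snd (lin_comb (0,0) addB (smB scale) (mag_eval (mulB l r p) b) \<Phi>) = snd (0, 0)"
    using snd_K[OF mem, of "{1..n}"] by simp
  show "fst (lin_comb (0,0) addB (smB scale) (mag_eval (mulB l r p) b) \<Phi>) = fst (0, 0)"
  proof (cases "\<Phi> = []")
    case True then show ?thesis by simp
  next
    case False
    then obtain d t where dt: "(d, t) \<in> set \<Phi>" by (metis list.set_sel(1) prod.collapse)
    have "n \<ge> 1"
    proof (rule ccontr)
      assume "\<not> n \<ge> 1"
      then have "set (leaves t) = {}" using leaves_poly[OF mem dt] by auto
      then show False by (metis leaves_ne set_empty)
    qed
    have "lin_comb 0 (+) scale (\<lambda>t. fst (mag_eval (mulB l r p) b t)) \<Phi> =
        lin_comb 0 (+) scale (tri_mag_eval l r p {1..n} (\<lambda>i. fst (b i))) \<Phi>"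
    proof (rule lin_comb_cong)
      fix d t assume "(d, t) \<in> set \<Phi>"
      then have "set (leaves t) = {1..n}" using leaves_poly mem by blast
      then show "fst (mag_eval (mulB l r p) b t) = tri_mag_eval l r p {1..n} (\<lambda>i. fst (b i)) t"
        by (simp add: fst_mag tri_mag_full)
    qed
    also have "\<dots> = 0" by (rule tid2[OF mem]) (use \<open>n \<ge> 1\<close> in auto)
    finally show ?thesis by (simp add: fst_lin)
  qed
qed

end

context triA
begin

lemmas mod_simps[simp] = module.scale_left_distrib[OF md] module.scale_scale[OF md]
  module.scale_one[OF md] module.scale_minus_left[OF md] module.scale_zero_left[OF md]

lemma psi_mag: "psi scale l r p \<beta> (mag_eval TMul f t) = mag_eval (mulB l r p) (psi scale l r p \<beta> \<circ> f) t"
  by (induction t) simp_all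

lemma psi_lin: "psi scale l r p \<beta> (lin_comb TZ TAdd TSm ev \<Phi>) =
    lin_comb (0,0) addB (smB scale) (psi scale l r p \<beta> \<circ> ev) \<Phi>"
  by (induction \<Phi>) auto

lemma psi_fcong: "fcong S a b \<Longrightarrow> psi scale l r p \<beta> a = psi scale l r p \<beta> b"
proof (induction rule: fcong.induct)
  case (ident n \<Phi> f)
  have "psi scale l r p \<beta> \<circ> mag_eval TMul f = mag_eval (mulB l r p) (psi scale l r p \<beta> \<circ> f)"
    by (rule ext) (simp add: psi_mag)
  then show ?case using B_ident[OF ident] by (simp add: psi_lin)
next
  case (add_neg a)
  then show ?case by (simp add: addB_def smB_def)
qed (simp_all add: addB_def smB_def mulB_def algebra_simps)

definition betaA :: "('x \<Rightarrow> 'a) \<Rightarrow> 'x + 'x \<Rightarrow> 'a \<times> 'a" where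
  "betaA \<alpha> v = (case v of Inl x \<Rightarrow> (\<alpha> x, 0) | Inr x \<Rightarrow> (0, \<alpha> x))"

definition EA :: "('x \<Rightarrow> 'a) \<Rightarrow> ('x + 'x, 'k) tm \<Rightarrow> 'a" where
  "EA \<alpha> t = fst (psi scale l r p (betaA \<alpha>) (phiT t))"

lemma psi_phiT_snd: "snd (psi scale l r p (betaA \<alpha>) (phiT t)) = 0"
  by (induction t) (auto simp: betaA_def addB_def smB_def mulB_def)

lemma psi_phiT: "psi scale l r p (betaA \<alpha>) (phiT t) = (EA \<alpha> t, 0)"
  using psi_phiT_snd[of \<alpha> t] unfolding EA_def by (simp add: prod_eq_iff)

lemma EA_simps: "EA \<alpha> (TMul a b) = p (EA \<alpha> a) (EA \<alpha> b)" "EA \<alpha> (TAdd a b) = EA \<alpha> a + EA \<alpha> b"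
  "EA \<alpha> (TSm c a) = scale c (EA \<alpha> a)" "EA \<alpha> (phiT a) = EA \<alpha> a" "EA \<alpha> TZ = 0"
  "EA \<alpha> (TV v) = \<alpha> (case v of Inl x \<Rightarrow> x | Inr x \<Rightarrow> x)"
proof -
  show "EA \<alpha> (TMul a b) = p (EA \<alpha> a) (EA \<alpha> b)"
    by (simp only: EA_def[of _ "TMul a b"] phiT.simps psi.simps psi_phiT) (simp add: mulB_simp)
  show "EA \<alpha> (TAdd a b) = EA \<alpha> a + EA \<alpha> b"
    by (simp only: EA_def[of _ "TAdd a b"] phiT.simps psi.simps psi_phiT) (simp add: addB_def)
  show "EA \<alpha> (TSm c a) = scale c (EA \<alpha> a)"
    by (simp only: EA_def[of _ "TSm c a"] phiT.simps psi.simps psi_phiT) (simp add: smB_def)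
  show "EA \<alpha> (phiT a) = EA \<alpha> a" by (simp only: EA_def phiT_idem)
  show "EA \<alpha> TZ = 0" by (simp add: EA_def)
  show "EA \<alpha> (TV v) = \<alpha> (case v of Inl x \<Rightarrow> x | Inr x \<Rightarrow> x)"
    by (simp add: EA_def betaA_def)
qed

lemma EA_fcong: "fcong S a b \<Longrightarrow> EA \<alpha> a = EA \<alpha> b"
proof -
  assume "fcong S a b"
  then have "fcong S (phiT a) (phiT b)" by (rule fcong_phiT)
  then have "psi scale l r p (betaA \<alpha>) (phiT a) = psi scale l r p (betaA \<alpha>) (phiT b)"
    by (rule psi_fcong)
  then show ?thesis unfolding EA_def by simp
qed

definition Inv :: "('x \<Rightarrow> 'a) \<Rightarrow> ('x + 'x, 'k) tm \<Rightarrow> bool" where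
  "Inv \<alpha> t \<longleftrightarrow> fst (psi scale l r p (betaA \<alpha>) t) = 0 \<and>
     (\<forall>w. r (EA \<alpha> t) w = r (snd (psi scale l r p (betaA \<alpha>) t)) w \<and>
          l w (EA \<alpha> t) = l w (snd (psi scale l r p (betaA \<alpha>) t)))"

lemma Inv_fcong: "fcong S a b \<Longrightarrow> Inv \<alpha> a \<Longrightarrow> Inv \<alpha> b"
proof -
  assume f: "fcong S a b" and i: "Inv \<alpha> a"
  have "psi scale l r p (betaA \<alpha>) a = psi scale l r p (betaA \<alpha>) b" using f by (rule psi_fcong)
  moreover have "EA \<alpha> a = EA \<alpha> b" using f by (rule EA_fcong)
  ultimately show ?thesis using i unfolding Inv_def by simp
qed

lemma Inv_rep: "Inv \<alpha> t \<Longrightarrow> Inv \<alpha> (rep (cls S t))"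
  by (rule Inv_fcong[OF rep_cls])

lemma Inv_dashv:
  assumes u: "Inv \<alpha> u" and w: "Inv \<alpha> w"
  shows "Inv \<alpha> (TMul u (phiT w))"
proof -
  let ?Ps = "psi scale l r p (betaA \<alpha>)"
  let ?E = "EA \<alpha>"
  obtain su where pu: "?Ps u = (0, su)" using u unfolding Inv_def by (metis prod.collapse)
  have iu: "r (?E u) y = r su y" "l y (?E u) = l y su" for y using u pu unfolding Inv_def by simp_all
  have ps: "?Ps (TMul u (phiT w)) = (0, l su (?E w))" by (simp add: pu psi_phiT mulB_simp)
  have e: "?E (TMul u (phiT w)) = p (?E u) (?E w)" by (simp add: EA_simps)
  have 1: "r (p (?E u) (?E w)) y = r (l su (?E w)) y" for y
    by (metis idr iu(1))
  have 2: "l y (p (?E u) (?E w)) = l y (l su (?E w))" for y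
    by (metis idl iu(1))
  show ?thesis unfolding Inv_def ps e using 1 2 by simp
qed

lemma Inv_vdash:
  assumes u: "Inv \<alpha> u" and w: "Inv \<alpha> w"
  shows "Inv \<alpha> (TMul (phiT u) w)"
proof -
  let ?Ps = "psi scale l r p (betaA \<alpha>)"
  let ?E = "EA \<alpha>"
  obtain sw where pw: "?Ps w = (0, sw)" using w unfolding Inv_def by (metis prod.collapse)
  have iw: "r (?E w) y = r sw y" "l y (?E w) = l y sw" for y using w pw unfolding Inv_def by simp_all
  have ps: "?Ps (TMul (phiT u) w) = (0, r (?E u) sw)" by (simp add: pw psi_phiT mulB_simp)
  have e: "?E (TMul (phiT u) w) = p (?E u) (?E w)" by (simp add: EA_simps)
  have 1: "r (p (?E u) (?E w)) y = r (r (?E u) sw) y" for y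
    by (metis idr iw(2))
  have 2: "l y (p (?E u) (?E w)) = l y (r (?E u) sw) " for y
    by (metis idl iw(2))
  show ?thesis unfolding Inv_def ps e using 1 2 by simp
qed

lemma Inv_perp:
  assumes u: "Inv \<alpha> u" and w: "Inv \<alpha> w"
  shows "Inv \<alpha> (TMul u w)"
proof -
  let ?Ps = "psi scale l r p (betaA \<alpha>)"
  let ?E = "EA \<alpha>"
  obtain su where pu: "?Ps u = (0, su)" using u unfolding Inv_def by (metis prod.collapse)
  have iu: "r (?E u) y = r su y" "l y (?E u) = l y su" for y using u pu unfolding Inv_def by simp_all
  obtain sw where pw: "?Ps w = (0, sw)" using w unfolding Inv_def by (metis prod.collapse)
  have iw: "r (?E w) y = r sw y" "l y (?E w) = l y sw" for y using w pw unfolding Inv_def by simp_all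
  have ps: "?Ps (TMul u w) = (0, p su sw)" by (simp add: pw pu mulB_simp)
  have e: "?E (TMul u w) = p (?E u) (?E w)" by (simp add: EA_simps)
  have 1: "r (p (?E u) (?E w)) y = r (p su sw) y" for y
  proof -
    have "r (p (?E u) (?E w)) y = r (r (?E u) (?E w)) y" by (rule idr)
    also have "\<dots> = r (r su (?E w)) y" by (simp add: iu)
    also have "\<dots> = r (l su (?E w)) y" by (simp add: idr)
    also have "\<dots> = r (l su sw) y" by (simp add: iw)
    also have "\<dots> = r (p su sw) y" by (simp add: idr)
    finally show ?thesis .
  qed
  have 2: "l y (p (?E u) (?E w)) = l y (p su sw)" for y
  proof -
    have "l y (p (?E u) (?E w)) = l y (l (?E u) (?E w))" by (simp add: idl)
    also have "\<dots> = l y (l (?E u) sw)" by (simp add: iw)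
    also have "\<dots> = l y (r (?E u) sw)" by (simp add: idl)
    also have "\<dots> = l y (r su sw)" by (simp add: iu)
    also have "\<dots> = l y (p su sw)" by (simp add: idl)
    finally show ?thesis .
  qed
  show ?thesis unfolding Inv_def ps e using 1 2 by simp
qed

end

context triA
begin

lemma psi_rep: "psi scale l r p \<beta> (rep (cls S t)) = psi scale l r p \<beta> t"
  using psi_fcong[OF rep_cls[of S t], of \<beta>] by simp

lemma Inv_V: "U \<in> Vset S X \<Longrightarrow> Inv \<alpha> (rep U)"
proof (induction rule: Vset.induct)
  case (gen x)
  have "Inv \<alpha> (TV (Inr x))" unfolding Inv_def by (simp add: EA_simps betaA_def)
  then show ?case unfolding dotF_def by (rule Inv_rep)
next
  case zero
  have "Inv \<alpha> TZ" unfolding Inv_def by (simp add: EA_simps)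
  then show ?case unfolding zeroF_def by (rule Inv_rep)
next
  case (add U W)
  have "Inv \<alpha> (TAdd (rep U) (rep W))" using add.IH unfolding Inv_def
    by (simp add: EA_simps addB_def)
  then show ?case unfolding addF_def by (rule Inv_rep)
next
  case (smul U c)
  have "Inv \<alpha> (TSm c (rep U))" using smul.IH unfolding Inv_def
    by (simp add: EA_simps smB_def)
  then show ?case unfolding smulF_def by (rule Inv_rep)
next
  case (dashv U W)
  have "Inv \<alpha> (TMul (rep U) (phiT (rep W)))" by (rule Inv_dashv[OF dashv.IH])
  then have "Inv \<alpha> (TMul (rep U) (rep (cls S (phiT (rep W)))))"
    by (rule Inv_fcong[OF fcong.cong_mul[OF fcong.refl rep_cls]])
  then show ?case unfolding dashvF_def mulF_def phiF_def by (rule Inv_rep)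
next
  case (vdash U W)
  have "Inv \<alpha> (TMul (phiT (rep U)) (rep W))" by (rule Inv_vdash[OF vdash.IH])
  then have "Inv \<alpha> (TMul (rep (cls S (phiT (rep U)))) (rep W))"
    by (rule Inv_fcong[OF fcong.cong_mul[OF rep_cls fcong.refl]])
  then show ?case unfolding vdashF_def mulF_def phiF_def by (rule Inv_rep)
next
  case (perp U W)
  have "Inv \<alpha> (TMul (rep U) (rep W))" by (rule Inv_perp[OF perp.IH])
  then show ?case unfolding perpF_def mulF_def by (rule Inv_rep)
qed

definition chiA :: "('x \<Rightarrow> 'a) \<Rightarrow> ('x + 'x, 'k) tm set \<Rightarrow> 'a" where
  "chiA \<alpha> U = snd (psi scale l r p (betaA \<alpha>) (rep U))"

lemma Inv_parts:
  assumes "U \<in> Vset S X"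
  shows "psi scale l r p (betaA \<alpha>) (rep U) = (0, chiA \<alpha> U)"
    "r (EA \<alpha> (rep U)) w = r (chiA \<alpha> U) w" "l w (EA \<alpha> (rep U)) = l w (chiA \<alpha> U)"
  using Inv_V[OF assms, of \<alpha>] unfolding Inv_def chiA_def by (simp_all add: prod_eq_iff)

lemma chi_cls: "chiA \<alpha> (cls S t) = snd (psi scale l r p (betaA \<alpha>) t)"
  unfolding chiA_def psi_rep ..

lemma chi_hom: "tri_hom_V S X scale l r p (chiA \<alpha>)"
  unfolding tri_hom_V_def
proof (intro conjI ballI allI)
  fix U W assume U: "U \<in> Vset S X" and W: "W \<in> Vset S X"
  note pU = Inv_parts[OF U, where \<alpha>=\<alpha>] and pW = Inv_parts[OF W, where \<alpha>=\<alpha>]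
  show "chiA \<alpha> (addF S U W) = chiA \<alpha> U + chiA \<alpha> W"
    unfolding addF_def chi_cls using pU pW by (simp add: addB_def)
  show "chiA \<alpha> (dashvF S U W) = l (chiA \<alpha> U) (chiA \<alpha> W)"
    unfolding dashvF_def mulF_def phiF_def chi_cls
    using pU(1) pW(3) by (simp add: psi_rep psi_phiT mulB_simp)
  show "chiA \<alpha> (vdashF S U W) = r (chiA \<alpha> U) (chiA \<alpha> W)"
    unfolding vdashF_def mulF_def phiF_def chi_cls
    using pU(2) pW(1) by (simp add: psi_rep psi_phiT mulB_simp)
  show "chiA \<alpha> (perpF S U W) = p (chiA \<alpha> U) (chiA \<alpha> W)"
    unfolding perpF_def mulF_def chi_cls
    using pU(1) pW(1) by (simp add: mulB_simp)
next
  fix c U assume U: "U \<in> Vset S X"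
  note pU = Inv_parts[OF U, where \<alpha>=\<alpha>]
  show "chiA \<alpha> (smulF S c U) = scale c (chiA \<alpha> U)"
    unfolding smulF_def chi_cls using pU(1) by (simp add: smB_def)
qed

lemma chi_gen: "chiA \<alpha> (dotF S x) = \<alpha> x"
  unfolding chiA_def dotF_def psi_rep by (simp add: betaA_def)

lemma zero_add: "addF S (zeroF S) (zeroF S) = zeroF S"
  unfolding zeroF_def addF_cls cls_eq_iff by (rule fcong.add_zero)

lemma hom_zero:
  assumes "tri_hom_V S X scale l r p \<chi>"
  shows "\<chi> (zeroF S) = 0"
proof -
  have "\<chi> (addF S (zeroF S) (zeroF S)) = \<chi> (zeroF S) + \<chi> (zeroF S)"
    using assms Vset.zero unfolding tri_hom_V_def by blast
  then show ?thesis by (simp add: zero_add)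
qed

lemma unique:
  assumes h1: "tri_hom_V S X scale l r p \<chi>1" and g1: "\<forall>x\<in>X. \<chi>1 (dotF S x) = \<alpha> x"
    and h2: "tri_hom_V S X scale l r p \<chi>2" and g2: "\<forall>x\<in>X. \<chi>2 (dotF S x) = \<alpha> x"
  shows "U \<in> Vset S X \<Longrightarrow> \<chi>1 U = \<chi>2 U"
proof (induction rule: Vset.induct)
  case (gen x) then show ?case using g1 g2 by simp
next
  case zero then show ?case using hom_zero[OF h1] hom_zero[OF h2] by simp
next
  case (add U W) then show ?case using h1 h2 unfolding tri_hom_V_def by simp
next
  case (smul U c) then show ?case using h1 h2 unfolding tri_hom_V_def by simp
next
  case (dashv U W) then show ?case using h1 h2 unfolding tri_hom_V_def by simp
next
  case (vdash U W) then show ?case using h1 h2 unfolding tri_hom_V_def by simp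
next
  case (perp U W) then show ?case using h1 h2 unfolding tri_hom_V_def by simp
qed

end

theorem theorem3p3:
  fixes S :: "(nat \<times> ('k::field, nat) mpoly) set"
    and X :: "'x set"
    and scale :: "'k \<Rightarrow> 'a::ab_group_add \<Rightarrow> 'a"
    and l r p :: "'a \<Rightarrow> 'a \<Rightarrow> 'a"
    and \<alpha> :: "'x \<Rightarrow> 'a"
  assumes "\<forall>(n, \<Phi>) \<in> S. polylinear n \<Phi>"
    and "tri_Var_algebra S scale l r p"
  shows "tri_ids S (Vset S X) (zeroF S) (addF S) (smulF S) (dashvF S) (vdashF S) (perpF S) \<and>
         (\<exists>\<chi>. tri_hom_V S X scale l r p \<chi> \<and> (\<forall>x\<in>X. \<chi> (dotF S x) = \<alpha> x) \<and>
              (\<forall>\<chi>'. tri_hom_V S X scale l r p \<chi>' \<and> (\<forall>x\<in>X. \<chi>' (dotF S x) = \<alpha> x)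
                     \<longrightarrow> (\<forall>U\<in>Vset S X. \<chi>' U = \<chi> U)))"
proof -
  interpret triA S scale l r p using assms by unfold_locales
  show ?thesis
  proof (intro conjI exI[of _ "chiA \<alpha>"] allI impI ballI)
    show "tri_ids S (Vset S X) (zeroF S) (addF S) (smulF S) (dashvF S) (vdashF S) (perpF S)"
      by (rule V_tri_ids[OF assms(1)])
    show "tri_hom_V S X scale l r p (chiA \<alpha>)" by (rule chi_hom)
    show "\<And>x. x \<in> X \<Longrightarrow> chiA \<alpha> (dotF S x) = \<alpha> x" by (rule chi_gen)
    fix \<chi>' U
    assume a: "tri_hom_V S X scale l r p \<chi>' \<and> (\<forall>x\<in>X. \<chi>' (dotF S x) = \<alpha> x)" and U: "U \<in> Vset S X"
    have g: "\<forall>x\<in>X. chiA \<alpha> (dotF S x) = \<alpha> x" by (simp add: chi_gen)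
    show "\<chi>' U = chiA \<alpha> U" using unique[OF conjunct1[OF a] conjunct2[OF a] chi_hom g U] .
  qed
qed

end
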